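(* Let $H:\mathbb{R}^{2m}\to\mathbb{R}$ be smooth and let $\bar y\in\mathbb{R}^{2m}$ with $F'=SH_{yy}(\bar y)$ invertible. Consider the scheme $$y_{n+1}-y_n=\theta_n\,S\,\bar\nabla H(y_n,y_{n+1}),\qquad \theta_n=2\Big(SR+F'\coth\frac{h_nF'}{2}\Big)^{-1},$$ where $\bar\nabla H$ is the coordinate increment discrete gradient. Here $R=(R_{jk})$ is the antisymmetric matrix with $$R_{jk}=H_{y^jy^k}\ (k<j),\qquad R_{jj}=0,\qquad R_{jk}=-H_{y^jy^k}\ (k>j),$$ evaluated at $\bar y$. This scheme is energy-preserving: $H(y_{n+1})=H(y_n)$.
   Context: Notation: - $y=(x,p)\in\mathbb{R}^{2m}$ with $y^1,\dots,y^m$ the components of $x$ and $y^{m+1},\dots,y^{2m}$ those of $p$; $y_n=(x_n,p_n)$ and $h_n$ is the time step. - $S=\begin{pmatrix}0&1\\-1&0\end{pmatrix}$ with $m\times m$ blocks. - $H_{yy}$ is the Hessian of $H$. The coordinate increment discrete gradient has components $$\frac{\Delta H}{\Delta y^j}=\frac{H(\hat y^j_n)-H(\hat y^{j-1}_n)}{y^j_{n+1}-y^j_n},\qquad \hat y^j_n=(y^1_{n+1},\dots,y^j_{n+1},y^{j+1}_n,\dots,y^{2m}_n),$$ with the partial derivative as limit when $y^j_{n+1}=y^j_n$. *)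

theory Defs
  imports "HOL-Analysis.Analysis"
begin

text \<open>Coordinates of \<open>R^{2m}\<close> are indexed by a finite linearly ordered type \<open>'n\<close>
  with \<open>CARD('n) = 2m\<close>; the coordinate \<open>i\<close> is \<open>y^{pos i + 1}\<close>.\<close>

definition pos :: "'n::{finite,linorder} \<Rightarrow> nat" where
  "pos i = card {j. j < i}"

text \<open>The symplectic matrix \<open>S = [[0, I],[-I, 0]]\<close> with \<open>m \<times> m\<close> blocks.\<close>
definition Smat :: "real^'n::{finite,linorder}^'n::{finite,linorder}" where
  "Smat = (\<chi> i j. if pos j = pos i + CARD('n::{finite,linorder}) div 2 then 1
                   else if pos i = pos j + CARD('n::{finite,linorder}) div 2 then -1 else 0)"

fun mpow :: "real^'n::finite^'n::finite \<Rightarrow> nat \<Rightarrow> real^'n::finite^'n::finite" where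
  "mpow A 0 = mat 1"
| "mpow A (Suc k) = A ** mpow A k"

definition msinh :: "real^'n::finite^'n::finite \<Rightarrow> real^'n::finite^'n::finite" where
  "msinh A = (\<Sum>k. (1 / fact (2*k+1)) *\<^sub>R mpow A (2*k+1))"

definition mcosh :: "real^'n::finite^'n::finite \<Rightarrow> real^'n::finite^'n::finite" where
  "mcosh A = (\<Sum>k. (1 / fact (2*k)) *\<^sub>R mpow A (2*k))"

definition mcoth :: "real^'n::finite^'n::finite \<Rightarrow> real^'n::finite^'n::finite" where
  "mcoth A = mcosh A ** matrix_inv (msinh A)"

definition partial :: "'n::finite \<Rightarrow> (real^'n::finite \<Rightarrow> real) \<Rightarrow> real^'n::finite \<Rightarrow> real" where
  "partial j f y = deriv (\<lambda>t. f (y + t *\<^sub>R axis j 1)) 0"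

definition smooth_fun :: "(real^'n::finite \<Rightarrow> real) \<Rightarrow> bool" where
  "smooth_fun f \<longleftrightarrow> (\<forall>js::'n list. continuous_on UNIV (foldr partial js f) \<and>
      (\<forall>j y. (\<lambda>t. foldr partial js f (y + t *\<^sub>R axis j 1)) differentiable (at 0)))"

definition hess :: "(real^'n::finite \<Rightarrow> real) \<Rightarrow> real^'n::finite \<Rightarrow> real^'n::finite^'n::finite" where
  "hess f y = (\<chi> j k. partial j (partial k f) y)"

definition Rmat :: "(real^'n::{finite,linorder} \<Rightarrow> real) \<Rightarrow> real^'n::{finite,linorder} \<Rightarrow> real^'n::{finite,linorder}^'n::{finite,linorder}" where
  "Rmat f y = (\<chi> j k. if k < j then hess f y $ j $ k
                      else if k = j then 0 else - hess f y $ j $ k)"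

definition ci_dgrad :: "(real^'n::{finite,linorder} \<Rightarrow> real) \<Rightarrow> real^'n::{finite,linorder} \<Rightarrow> real^'n::{finite,linorder} \<Rightarrow> real^'n::{finite,linorder}" where
  "ci_dgrad f y y' = (\<chi> j.
     let a = (\<chi> k. if k < j then y' $ k else y $ k);
         b = (\<chi> k. if k \<le> j then y' $ k else y $ k)
     in if y' $ j = y $ j then partial j f a else (f b - f a) / (y' $ j - y $ j))"

end

theory Submission
  imports Defs
begin



lemma clairaut2:
  fixes \<phi> D1 D2 D12 D21 :: "real \<Rightarrow> real \<Rightarrow> real"
  assumes d1: "\<And>s t. ((\<lambda>s. \<phi> s t) has_real_derivative D1 s t) (at s)"
    and d12: "\<And>s t. ((\<lambda>t. D1 s t) has_real_derivative D12 s t) (at t)"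
    and d2: "\<And>s t. ((\<lambda>t. \<phi> s t) has_real_derivative D2 s t) (at t)"
    and d21: "\<And>s t. ((\<lambda>s. D2 s t) has_real_derivative D21 s t) (at s)"
    and c12: "\<And>e. e > 0 \<Longrightarrow> \<exists>d>0. \<forall>s t. \<bar>s\<bar> < d \<and> \<bar>t\<bar> < d \<longrightarrow> \<bar>D12 s t - D12 0 0\<bar> < e"
    and c21: "\<And>e. e > 0 \<Longrightarrow> \<exists>d>0. \<forall>s t. \<bar>s\<bar> < d \<and> \<bar>t\<bar> < d \<longrightarrow> \<bar>D21 s t - D21 0 0\<bar> < e"
  shows "D12 0 0 = D21 0 0"
proof -
  have key: "\<exists>a b c d. 0 < a \<and> a < u \<and> 0 < b \<and> b < u \<and> 0 < c \<and> c < u \<and> 0 < d \<and> d < u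
      \<and> D12 a b = D21 c d" if u: "u > 0" for u
  proof -
    define \<Delta> where "\<Delta> = \<phi> u u - \<phi> u 0 - \<phi> 0 u + \<phi> 0 0"
    have "((\<lambda>s. \<phi> s u - \<phi> s 0) has_real_derivative D1 x u - D1 x 0) (at x)" for x
      by (intro derivative_intros d1)
    then obtain a where a: "0 < a" "a < u" "(\<phi> u u - \<phi> u 0) - (\<phi> 0 u - \<phi> 0 0) = (u - 0) * (D1 a u - D1 a 0)"
      using MVT2[of 0 u "\<lambda>s. \<phi> s u - \<phi> s 0" "\<lambda>s. D1 s u - D1 s 0"] u
      by auto
    obtain b where b: "0 < b" "b < u" "D1 a u - D1 a 0 = (u - 0) * D12 a b"
      using MVT2[of 0 u "\<lambda>t. D1 a t" "\<lambda>t. D12 a t"] u d12 by auto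
    have "((\<lambda>t. \<phi> u t - \<phi> 0 t) has_real_derivative D2 u x - D2 0 x) (at x)" for x
      by (intro derivative_intros d2)
    then obtain d where d: "0 < d" "d < u" "(\<phi> u u - \<phi> 0 u) - (\<phi> u 0 - \<phi> 0 0) = (u - 0) * (D2 u d - D2 0 d)"
      using MVT2[of 0 u "\<lambda>t. \<phi> u t - \<phi> 0 t" "\<lambda>t. D2 u t - D2 0 t"] u
      by auto
    obtain c where c: "0 < c" "c < u" "D2 u d - D2 0 d = (u - 0) * D21 c d"
      using MVT2[of 0 u "\<lambda>s. D2 s d" "\<lambda>s. D21 s d"] u d21 by auto
    have "u * (u * D12 a b) = u * (u * D21 c d)"
      using a(3) b(3) c(3) d(3) by (auto simp: algebra_simps)
    then have "D12 a b = D21 c d" using u by simp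
    then show ?thesis using a b c d by blast
  qed
  show ?thesis
  proof (rule ccontr)
    assume ne: "D12 0 0 \<noteq> D21 0 0"
    define e where "e = \<bar>D12 0 0 - D21 0 0\<bar> / 2"
    have e: "e > 0" using ne by (simp add: e_def)
    obtain d1 where d1: "d1 > 0" "\<forall>s t. \<bar>s\<bar> < d1 \<and> \<bar>t\<bar> < d1 \<longrightarrow> \<bar>D12 s t - D12 0 0\<bar> < e"
      using c12[OF e] by blast
    obtain d2 where d2: "d2 > 0" "\<forall>s t. \<bar>s\<bar> < d2 \<and> \<bar>t\<bar> < d2 \<longrightarrow> \<bar>D21 s t - D21 0 0\<bar> < e"
      using c21[OF e] by blast
    define u where "u = min d1 d2"
    have "u > 0" using d1 d2 by (simp add: u_def)
    then obtain a b c d where abcd: "0 < a \<and> a < u \<and> 0 < b \<and> b < u \<and> 0 < c \<and> c < u \<and> 0 < d \<and> d < u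
      \<and> D12 a b = D21 c d" using key by blast
    have "\<bar>D12 a b - D12 0 0\<bar> < e" using d1(2)[rule_format, of a b] abcd unfolding u_def by auto
    moreover have "\<bar>D21 c d - D21 0 0\<bar> < e" using d2(2)[rule_format, of c d] abcd unfolding u_def by auto
    moreover have "D12 a b = D21 c d" using abcd by blast
    ultimately show False unfolding e_def by (auto simp: abs_if split: if_split_asm)
  qed
qed




lemma partial_hasderiv:
  assumes "\<And>y. (\<lambda>t. g (y + t *\<^sub>R axis j 1)) differentiable (at 0)"
  shows "((\<lambda>t. g (y + t *\<^sub>R axis j (1::real))) has_real_derivative partial j g (y + s *\<^sub>R axis j 1)) (at s)"
proof -
  let ?y = "y + s *\<^sub>R axis j 1"
  have "((\<lambda>t. g (?y + t *\<^sub>R axis j 1)) has_real_derivative partial j g ?y) (at 0)"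
    using assms[of ?y] unfolding partial_def
    by (simp add: DERIV_deriv_iff_real_differentiable)
  moreover have "(\<lambda>t. g (?y + t *\<^sub>R axis j 1)) = (\<lambda>t. (\<lambda>t. g (y + t *\<^sub>R axis j (1::real))) (t + s))"
    by (auto simp: algebra_simps)
  ultimately have "((\<lambda>t. (\<lambda>t. g (y + t *\<^sub>R axis j (1::real))) (t + s)) has_real_derivative partial j g ?y) (at 0)"
    by simp
  then show ?thesis using DERIV_shift[of "\<lambda>t. g (y + t *\<^sub>R axis j (1::real))" "partial j g ?y" 0 s]
    by simp
qed

lemma smooth_partial: "smooth_fun f \<Longrightarrow> smooth_fun (partial j f)"
  unfolding smooth_fun_def
proof (intro allI conjI)
  fix js :: "'a list"
  assume h: "\<forall>js::'a list. continuous_on UNIV (foldr partial js f) \<and>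
      (\<forall>j y. (\<lambda>t. foldr partial js f (y + t *\<^sub>R axis j 1)) differentiable (at 0))"
  have eq: "foldr partial js (partial j f) = foldr partial (js @ [j]) f" by simp
  show "continuous_on UNIV (foldr partial js (partial j f))" using h eq by metis
  fix i y
  show "(\<lambda>t. foldr partial js (partial j f) (y + t *\<^sub>R axis i 1)) differentiable (at 0)"
    using h eq by metis
qed

lemma smooth_diff: "smooth_fun f \<Longrightarrow> (\<lambda>t. f (y + t *\<^sub>R axis j 1)) differentiable (at 0)"
  unfolding smooth_fun_def by (metis foldr_Nil id_apply)

lemma smooth_cont: "smooth_fun f \<Longrightarrow> continuous_on UNIV f"
  unfolding smooth_fun_def by (metis foldr_Nil id_apply)

lemma cont_near:
  fixes g :: "real^'n \<Rightarrow> real"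
  assumes "continuous_on UNIV g" "e > 0"
  shows "\<exists>d>0. \<forall>s t. \<bar>s\<bar> < d \<and> \<bar>t\<bar> < d \<longrightarrow>
     \<bar>g (y + s *\<^sub>R axis j 1 + t *\<^sub>R axis k 1) - g (y + 0 *\<^sub>R axis j 1 + 0 *\<^sub>R axis k 1)\<bar> < e"
proof -
  have "isCont g y" using assms(1) by (simp add: continuous_on_eq_continuous_at)
  then obtain d where d: "d > 0" "\<And>z. dist z y < d \<Longrightarrow> dist (g z) (g y) < e"
    using assms(2) unfolding continuous_at_eps_delta by blast
  show ?thesis
  proof (intro exI[of _ "d/2"] conjI allI impI)
    show "d/2 > 0" using d by simp
    fix s t :: real assume st: "\<bar>s\<bar> < d/2 \<and> \<bar>t\<bar> < d/2"
    have "dist (y + s *\<^sub>R axis j 1 + t *\<^sub>R axis k 1) y = norm (s *\<^sub>R axis j (1::real) + t *\<^sub>R axis k 1)"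
      by (simp add: dist_norm)
    also have "\<dots> \<le> norm (s *\<^sub>R axis j (1::real)) + norm (t *\<^sub>R axis k (1::real))"
      by (rule norm_triangle_ineq)
    also have "\<dots> = \<bar>s\<bar> + \<bar>t\<bar>" by simp
    finally have "dist (y + s *\<^sub>R axis j 1 + t *\<^sub>R axis k 1) y < d" using st by linarith
    from d(2)[OF this] show "\<bar>g (y + s *\<^sub>R axis j 1 + t *\<^sub>R axis k 1) - g (y + 0 *\<^sub>R axis j 1 + 0 *\<^sub>R axis k 1)\<bar> < e"
      by (simp add: dist_real_def)
  qed
qed

lemma hess_sym:
  fixes f :: "real^'n \<Rightarrow> real"
  assumes sm: "smooth_fun f"
  shows "partial k (partial j f) y = partial j (partial k f) y"
proof -
  define p where "p = (\<lambda>s t. y + s *\<^sub>R axis j (1::real) + t *\<^sub>R axis k 1)"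
  have p1: "p s t = (y + t *\<^sub>R axis k 1) + s *\<^sub>R axis j 1" for s t by (simp add: p_def algebra_simps)
  have p2: "p s t = (y + s *\<^sub>R axis j 1) + t *\<^sub>R axis k 1" for s t by (simp add: p_def algebra_simps)
  have smj: "smooth_fun (partial j f)" by (rule smooth_partial[OF sm])
  have smk: "smooth_fun (partial k f)" by (rule smooth_partial[OF sm])
  have h1: "((\<lambda>s. f (p s t)) has_real_derivative partial j f (p s t)) (at s)" for s t
    unfolding p1 by (rule partial_hasderiv[OF smooth_diff[OF sm]])
  have h2: "((\<lambda>t. partial j f (p s t)) has_real_derivative partial k (partial j f) (p s t)) (at t)" for s t
    unfolding p2 by (rule partial_hasderiv[OF smooth_diff[OF smj]])
  have h3: "((\<lambda>t. f (p s t)) has_real_derivative partial k f (p s t)) (at t)" for s t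
    unfolding p2 by (rule partial_hasderiv[OF smooth_diff[OF sm]])
  have h4: "((\<lambda>s. partial k f (p s t)) has_real_derivative partial j (partial k f) (p s t)) (at s)" for s t
    unfolding p1 by (rule partial_hasderiv[OF smooth_diff[OF smk]])
  have h5: "\<exists>d>0. \<forall>s t. \<bar>s\<bar> < d \<and> \<bar>t\<bar> < d \<longrightarrow> \<bar>partial k (partial j f) (p s t) - partial k (partial j f) (p 0 0)\<bar> < e"
    if "e > 0" for e
    unfolding p_def by (rule cont_near[OF smooth_cont[OF smooth_partial[OF smj]] that])
  have h6: "\<exists>d>0. \<forall>s t. \<bar>s\<bar> < d \<and> \<bar>t\<bar> < d \<longrightarrow> \<bar>partial j (partial k f) (p s t) - partial j (partial k f) (p 0 0)\<bar> < e"
    if "e > 0" for e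
    unfolding p_def by (rule cont_near[OF smooth_cont[OF smooth_partial[OF smk]] that])
  have "partial k (partial j f) (p 0 0) = partial j (partial k f) (p 0 0)"
    by (rule clairaut2[OF h1 h2 h3 h4 h5 h6])
  then show ?thesis by (simp add: p_def)
qed




lemma pos_less: "(i::'n::{finite,linorder}) < i' \<Longrightarrow> pos i < pos i'"
  unfolding pos_def
  by (rule psubset_card_mono) auto

lemma pos_less_iff: "pos (i::'n::{finite,linorder}) < pos i' \<longleftrightarrow> i < i'"
  by (metis not_less_iff_gr_or_eq pos_less order_less_asym)

lemma pos_le_iff: "pos (i::'n::{finite,linorder}) \<le> pos i' \<longleftrightarrow> i \<le> i'"
  by (meson not_le pos_less_iff)

lemma pos_bound: "pos (i::'n::{finite,linorder}) < CARD('n)"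
  unfolding pos_def by (rule psubset_card_mono) auto

lemma pos_inj: "pos (i::'n::{finite,linorder}) = pos i' \<Longrightarrow> i = i'"
  by (metis nat_neq_iff pos_less_iff not_less_iff_gr_or_eq)

lemma pos_bij: "bij_betw (pos :: 'n::{finite,linorder} \<Rightarrow> nat) UNIV {..<CARD('n)}"
proof -
  have inj: "inj (pos :: 'n \<Rightarrow> nat)"
    by (rule injI) (metis nat_neq_iff pos_less_iff not_less_iff_gr_or_eq)
  have sub: "range (pos :: 'n \<Rightarrow> nat) \<subseteq> {..<CARD('n)}" using pos_bound by auto
  have "card (range (pos :: 'n \<Rightarrow> nat)) = CARD('n)" using card_image[OF inj] by simp
  then have "range (pos :: 'n \<Rightarrow> nat) = {..<CARD('n)}"
    using sub by (intro card_subset_eq) auto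
  then show ?thesis using inj by (simp add: bij_betw_def)
qed

lemma dgrad_telescope:
  fixes f :: "real^'n::{finite,linorder} \<Rightarrow> real"
  shows "f y' - f y = ci_dgrad f y y' \<bullet> (y' - y)"
proof -
  define z where "z k = (\<chi> i. if pos i < k then y' $ i else y $ i)" for k
  have z0: "z 0 = y" by (simp add: z_def vec_eq_iff)
  have zN: "z CARD('n) = y'" by (simp add: z_def vec_eq_iff pos_bound)
  have "f y' - f y = (\<Sum>k<CARD('n). f (z (Suc k)) - f (z k))"
    using sum_lessThan_telescope[of "\<lambda>k. f (z k)" "CARD('n)"] z0 zN by simp
  also have "\<dots> = (\<Sum>i\<in>(UNIV::'n set). f (z (Suc (pos i))) - f (z (pos i)))"
    by (rule sum.reindex_bij_betw[OF pos_bij[where 'n='n], of "\<lambda>k. f (z (Suc k)) - f (z k)", symmetric])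
  also have "\<dots> = (\<Sum>i\<in>UNIV. ci_dgrad f y y' $ i * (y' - y) $ i)"
  proof (rule sum.cong[OF refl])
    fix i :: 'n
    have a: "(\<chi> k. if k < i then y' $ k else y $ k) = z (pos i)"
      by (simp add: z_def vec_eq_iff pos_less_iff)
    have b: "(\<chi> k. if k \<le> i then y' $ k else y $ k) = z (Suc (pos i))"
      by (simp add: z_def vec_eq_iff less_Suc_eq_le pos_le_iff)
    show "f (z (Suc (pos i))) - f (z (pos i)) = ci_dgrad f y y' $ i * (y' - y) $ i"
    proof (cases "y' $ i = y $ i")
      case True
      then have "z (Suc (pos i)) = z (pos i)"
        by (auto simp: z_def vec_eq_iff less_Suc_eq dest: pos_inj)
      then show ?thesis using True by simp
    next
      case False
      then show ?thesis unfolding ci_dgrad_def Let_def by (simp add: a b)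
    qed
  qed
  also have "\<dots> = ci_dgrad f y y' \<bullet> (y' - y)" by (simp add: inner_vec_def)
  finally show ?thesis .
qed




type_synonym 'n mat = "real^'n^'n"

lemma mmul_scaleR_right: "(A::real^'n^'m) ** (k *\<^sub>R B) = k *\<^sub>R (A ** (B::real^'p^'n))"
  by (simp add: matrix_matrix_mult_def sum_distrib_left mult_ac vec_eq_iff)

lemma mmul_scaleR_left: "(k *\<^sub>R (A::real^'n^'m)) ** B = k *\<^sub>R (A ** (B::real^'p^'n))"
  by (simp add: matrix_matrix_mult_def sum_distrib_left mult_ac vec_eq_iff)

lemma mmul_add_left: "((A::real^'n^'m) + B) ** (C::real^'p^'n) = A ** C + B ** C"
  by (simp add: matrix_matrix_mult_def sum.distrib distrib_right vec_eq_iff)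

lemma mmul_neg_left: "(- (A::real^'n^'m)) ** (C::real^'p^'n) = - (A ** C)"
  by (simp add: matrix_matrix_mult_def sum_negf vec_eq_iff)

lemma mmul_neg_right: "(A::real^'n^'m) ** (- C::real^'p^'n) = - (A ** C)"
  by (simp add: matrix_matrix_mult_def sum_negf vec_eq_iff)

lemma bl_mul_right: "bounded_linear (\<lambda>X::real^'n^'m. X ** (P::real^'p^'n))"
  unfolding linear_conv_bounded_linear[symmetric]
  by (rule linearI) (simp_all add: mmul_add_left mmul_scaleR_left)

lemma bl_mul_left: "bounded_linear (\<lambda>X::real^'p^'n. (P::real^'n^'m) ** X)"
  unfolding linear_conv_bounded_linear[symmetric]
  by (rule linearI) (simp_all add: matrix_add_ldistrib mmul_scaleR_right)

lemma bl_transpose: "bounded_linear (transpose :: real^'n^'m \<Rightarrow> real^'m^'n)"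
  unfolding linear_conv_bounded_linear[symmetric]
  by (rule linearI) (simp_all add: transpose_def vec_eq_iff)

lemma entry_le_norm: "\<bar>(A::real^'n^'m) $ i $ k\<bar> \<le> norm A"
  by (rule order_trans[OF component_le_norm_cart Finite_Cartesian_Product.norm_nth_le])

lemma norm_mmul:
  fixes A B :: "real^'n^'n"
  shows "norm (A ** B) \<le> real CARD('n) * (real CARD('n) * (real CARD('n) * (norm A * norm B)))"
proof -
  let ?N = "real CARD('n)"
  have e: "\<bar>(A ** B) $ i $ j\<bar> \<le> ?N * (norm A * norm B)" for i j
  proof -
    have "\<bar>(A ** B) $ i $ j\<bar> = \<bar>\<Sum>k\<in>UNIV. A $ i $ k * B $ k $ j\<bar>"
      by (simp add: matrix_matrix_mult_def)
    also have "\<dots> \<le> (\<Sum>k\<in>UNIV. \<bar>A $ i $ k * B $ k $ j\<bar>)" by (rule sum_abs)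
    also have "\<dots> \<le> (\<Sum>k\<in>(UNIV::'n set). norm A * norm B)"
      by (intro sum_mono) (simp add: abs_mult mult_mono entry_le_norm)
    finally show ?thesis by simp
  qed
  have r: "norm ((A ** B) $ i) \<le> ?N * (?N * (norm A * norm B))" for i
  proof -
    have "norm ((A ** B) $ i) \<le> (\<Sum>j\<in>UNIV. \<bar>(A ** B) $ i $ j\<bar>)" by (rule norm_le_l1_cart)
    also have "\<dots> \<le> (\<Sum>j\<in>(UNIV::'n set). ?N * (norm A * norm B))" by (intro sum_mono e)
    finally show ?thesis by simp
  qed
  have "norm (A ** B) \<le> (\<Sum>i\<in>UNIV. norm ((A ** B) $ i))"
    unfolding norm_vec_def by (rule L2_set_le_sum) simp
  also have "\<dots> \<le> (\<Sum>i\<in>(UNIV::'n set). ?N * (?N * (norm A * norm B)))" by (intro sum_mono r)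
  finally show ?thesis by simp
qed

definition KK :: "'n::finite itself \<Rightarrow> real" where "KK _ = real CARD('n) * (real CARD('n) * real CARD('n))"

lemma norm_mpow:
  fixes A :: "real^'n::finite^'n"
  shows "norm (mpow A n) \<le> norm (mat 1 :: real^'n^'n) * (KK TYPE('n) * norm A) ^ n"
proof (induction n)
  case 0 then show ?case by simp
next
  case (Suc n)
  have "norm (mpow A (Suc n)) \<le> KK TYPE('n) * (norm A * norm (mpow A n))"
    using norm_mmul[of A "mpow A n"] by (simp add: KK_def mult_ac)
  also have "\<dots> \<le> KK TYPE('n) * (norm A * (norm (mat 1 :: real^'n^'n) * (KK TYPE('n) * norm A) ^ n))"
    by (intro mult_left_mono Suc) (auto simp: KK_def)
  finally show ?case by (simp add: mult_ac)
qed

lemma summable_mseries: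
  fixes A :: "real^'n::finite^'n" and a :: "nat \<Rightarrow> real"
  assumes "summable (\<lambda>k. \<bar>a k\<bar> * (KK TYPE('n) * norm A) ^ d k)"
  shows "summable (\<lambda>k. a k *\<^sub>R mpow A (d k))"
proof (rule summable_comparison_test'[where N=0])
  show "summable (\<lambda>k. norm (mat 1 :: real^'n^'n) * (\<bar>a k\<bar> * (KK TYPE('n) * norm A) ^ d k))"
    using assms by (rule summable_mult)
  fix k
  show "norm (a k *\<^sub>R mpow A (d k)) \<le> norm (mat 1 :: real^'n^'n) * (\<bar>a k\<bar> * (KK TYPE('n) * norm A) ^ d k)"
    using mult_left_mono[OF norm_mpow[of A "d k"] abs_ge_zero[of "a k"]] by (simp add: mult_ac)
qed

lemma summable_sinh: "summable (\<lambda>k. (1 / fact (2*k+1)) *\<^sub>R mpow (A::real^'n::finite^'n) (2*k+1))"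
proof (rule summable_mseries[where d = "\<lambda>k. 2*k+1"])
  define B where "B = KK TYPE('n) * norm A"
  have B: "B \<ge> 0" by (simp add: B_def KK_def)
  have "summable (\<lambda>k. B * (inverse (fact k) * (B^2) ^ k))"
    by (intro summable_mult summable_exp)
  moreover have "norm (\<bar>1 / fact (2*k+1)\<bar> * B ^ (2*k+1)) \<le> B * (inverse (fact k) * (B^2) ^ k)" for k
  proof -
    have f: "fact k \<le> (fact (2*k+1) :: real)" by (rule fact_mono) simp
    have p: "B^(2*k+1) = B * (B^2)^k" by (simp add: power_mult[symmetric])
    have "\<bar>1 / fact (2*k+1)\<bar> * B ^ (2*k+1) = B * ((B^2)^k / fact (2*k+1))"
      unfolding p by simp
    also have "\<dots> \<le> B * ((B^2)^k / fact k)"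
      by (intro mult_left_mono divide_left_mono f B) (auto simp: fact_gt_zero)
    finally show ?thesis using B by (simp add: divide_inverse mult_ac)
  qed
  ultimately show "summable (\<lambda>k. \<bar>1 / fact (2*k+1)\<bar> * (KK TYPE('n) * norm A) ^ (2*k+1))"
    unfolding B_def by (rule summable_comparison_test'[where N=0]) 
qed

lemma summable_cosh: "summable (\<lambda>k. (1 / fact (2*k)) *\<^sub>R mpow (A::real^'n::finite^'n) (2*k))"
proof (rule summable_mseries[where d = "\<lambda>k. 2*k"])
  define B where "B = KK TYPE('n) * norm A"
  have B: "B \<ge> 0" by (simp add: B_def KK_def)
  have "summable (\<lambda>k. (inverse (fact k) * (B^2) ^ k))"
    by (intro summable_exp)
  moreover have "norm (\<bar>1 / fact (2*k)\<bar> * B ^ (2*k)) \<le> (inverse (fact k) * (B^2) ^ k)" for k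
  proof -
    have f: "fact k \<le> (fact (2*k) :: real)" by (rule fact_mono) simp
    have p: "B^(2*k) = (B^2)^k" by (simp add: power_mult[symmetric])
    have "\<bar>1 / fact (2*k)\<bar> * B ^ (2*k) = ((B^2)^k / fact (2*k))"
      unfolding p by simp
    also have "\<dots> \<le> ((B^2)^k / fact k)"
      by (intro divide_left_mono f) (auto simp: fact_gt_zero)
    finally show ?thesis using B by (simp add: divide_inverse mult_ac)
  qed
  ultimately show "summable (\<lambda>k. \<bar>1 / fact (2*k)\<bar> * (KK TYPE('n) * norm A) ^ (2*k))"
    unfolding B_def by (rule summable_comparison_test'[where N=0]) 
qed




lemma mpow_comm:
  fixes A B :: "real^'n::finite^'n"
  assumes "B ** A = A ** B"
  shows "mpow A n ** B = B ** mpow A n"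
proof (induction n)
  case 0 then show ?case by simp
next
  case (Suc n)
  have "mpow A (Suc n) ** B = A ** (mpow A n ** B)" by (simp add: matrix_mul_assoc)
  also have "\<dots> = (A ** B) ** mpow A n" by (simp add: Suc matrix_mul_assoc)
  also have "\<dots> = B ** mpow A (Suc n)" by (simp add: assms[symmetric] matrix_mul_assoc)
  finally show ?case .
qed

lemma series_comm:
  fixes A B :: "real^'n::finite^'n"
  assumes sm: "summable (\<lambda>k. a k *\<^sub>R mpow A (d k))" and c: "B ** A = A ** B"
  shows "(\<Sum>k. a k *\<^sub>R mpow A (d k)) ** B = B ** (\<Sum>k. a k *\<^sub>R mpow A (d k))"
proof -
  have "(\<Sum>k. a k *\<^sub>R mpow A (d k)) ** B = (\<Sum>k. (a k *\<^sub>R mpow A (d k)) ** B)"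
    by (rule bounded_linear.suminf[OF bl_mul_right sm])
  also have "\<dots> = (\<Sum>k. B ** (a k *\<^sub>R mpow A (d k)))"
    by (simp add: mmul_scaleR_left mmul_scaleR_right mpow_comm[OF c])
  also have "\<dots> = B ** (\<Sum>k. a k *\<^sub>R mpow A (d k))"
    by (rule bounded_linear.suminf[OF bl_mul_left sm, symmetric])
  finally show ?thesis .
qed

lemma sinh_cosh_comm:
  fixes A :: "real^'n::finite^'n"
  shows "mcosh A ** msinh A = msinh A ** mcosh A"
proof -
  have "msinh A ** A = A ** msinh A"
    unfolding msinh_def by (rule series_comm[OF summable_sinh]) simp
  then show ?thesis unfolding mcosh_def
    by (rule series_comm[OF summable_cosh])
qed

lemma transpose_mpow:
  fixes A :: "real^'n::finite^'n"
  shows "transpose (mpow A n) = mpow (transpose A) n"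
proof (induction n)
  case 0 then show ?case by simp
next
  case (Suc n)
  then show ?case
    by (simp add: matrix_transpose_mul mpow_comm[of "transpose A" "transpose A"])
qed

lemma mpow_sw:
  fixes A P :: "real^'n::finite^'n"
  assumes h: "transpose A ** P = - (P ** A)"
  shows "mpow (transpose A) n ** P = (-1)^n *\<^sub>R (P ** mpow A n)"
proof (induction n)
  case 0 then show ?case by simp
next
  case (Suc n)
  have "mpow (transpose A) (Suc n) ** P = transpose A ** (mpow (transpose A) n ** P)"
    by (simp add: matrix_mul_assoc)
  also have "\<dots> = (-1)^n *\<^sub>R ((transpose A ** P) ** mpow A n)"
    by (simp add: Suc mmul_scaleR_right matrix_mul_assoc)
  also have "\<dots> = (-1)^(Suc n) *\<^sub>R (P ** mpow A (Suc n))"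
    by (simp add: h mmul_neg_left matrix_mul_assoc)
  finally show ?case .
qed

lemma series_T:
  fixes A P :: "real^'n::finite^'n"
  assumes sm: "summable (\<lambda>k. a k *\<^sub>R mpow A (d k))"
    and h: "transpose A ** P = - (P ** A)"
    and sg: "\<And>k. (-1::real)^(d k) = \<sigma>"
  shows "transpose (\<Sum>k. a k *\<^sub>R mpow A (d k)) ** P = \<sigma> *\<^sub>R (P ** (\<Sum>k. a k *\<^sub>R mpow A (d k)))"
proof -
  have bl: "bounded_linear (\<lambda>X::real^'n^'n. transpose X ** P)"
    using bounded_linear_compose[OF bl_mul_right[where P=P] bl_transpose[where 'n='n and 'm='n]] by (simp add: o_def)
  have bl2: "bounded_linear (\<lambda>X::real^'n^'n. \<sigma> *\<^sub>R (P ** X))"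
    using bounded_linear_compose[OF bounded_linear_scaleR_right[of \<sigma>] bl_mul_left[where P=P and 'p='n]] by (simp add: o_def)
  have "transpose (\<Sum>k. a k *\<^sub>R mpow A (d k)) ** P = (\<Sum>k. transpose (a k *\<^sub>R mpow A (d k)) ** P)"
    by (rule bounded_linear.suminf[OF bl sm])
  also have "\<dots> = (\<Sum>k. \<sigma> *\<^sub>R (P ** (a k *\<^sub>R mpow A (d k))))"
    by (simp add: transpose_scalar transpose_mpow mmul_scaleR_left mmul_scaleR_right mpow_sw[OF h] sg mult.commute)
  also have "\<dots> = \<sigma> *\<^sub>R (P ** (\<Sum>k. a k *\<^sub>R mpow A (d k)))"
    by (rule bounded_linear.suminf[OF bl2 sm, symmetric])
  finally show ?thesis .
qed

lemma sinh_T: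
  fixes A P :: "real^'n::finite^'n"
  assumes h: "transpose A ** P = - (P ** A)"
  shows "transpose (msinh A) ** P = - (P ** msinh A)"
  using series_T[OF summable_sinh h, of "-1"] unfolding msinh_def by simp

lemma cosh_T:
  fixes A P :: "real^'n::finite^'n"
  assumes h: "transpose A ** P = - (P ** A)"
  shows "transpose (mcosh A) ** P = P ** mcosh A"
  using series_T[OF summable_cosh h, of "1"] unfolding mcosh_def by (simp add: power_mult)




lemma inv_props:
  fixes X :: "real^'n::finite^'n"
  assumes "invertible X"
  shows "X ** matrix_inv X = mat 1" "matrix_inv X ** X = mat 1"
proof -
  have "\<exists>X'. X ** X' = mat 1 \<and> X' ** X = mat 1" using assms by (simp add: invertible_def)
  then have "X ** matrix_inv X = mat 1 \<and> matrix_inv X ** X = mat 1"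
    unfolding matrix_inv_def by (rule someI_ex)
  then show "X ** matrix_inv X = mat 1" "matrix_inv X ** X = mat 1" by auto
qed

lemma Smat_T:
  assumes "even CARD('n::{finite,linorder})"
  shows "transpose (Smat :: real^'n::{finite,linorder}^'n::{finite,linorder}) = - Smat"
proof -
  have c0: "CARD('n) > 0" by simp
  from assms obtain b where b: "CARD('n) = 2*b" by (auto elim: evenE)
  have m: "CARD('n) div 2 > 0" using b c0 by simp
  show ?thesis
    unfolding Smat_def transpose_def vec_eq_iff using m by auto
qed

lemma scaleR_mvmul: "(k *\<^sub>R (A::real^'n::finite^'m::finite)) *v x = k *\<^sub>R (A *v x)"
  by (simp add: matrix_vector_mult_def vec_eq_iff sum_distrib_left mult_ac)

lemma skew_form:
  fixes N :: "real^'n::finite^'n"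
  assumes "transpose N = - N"
  shows "(N *v w) \<bullet> w = 0"
proof -
  have "(N *v w) \<bullet> w = w \<bullet> (N *v w)" by (simp add: inner_commute)
  also have "\<dots> = (w v* N) \<bullet> w" by (simp add: dot_lmul_matrix)
  also have "\<dots> = (transpose N *v w) \<bullet> w" by simp
  also have "\<dots> = - ((N *v w) \<bullet> w)" unfolding assms
    by (simp add: matrix_vector_mult_def inner_vec_def sum_negf vec_eq_iff)
  finally show ?thesis by simp
qed

theorem proposition6p11:
  fixes H :: "real^'n::{finite,linorder} \<Rightarrow> real"
    and ybar y y' :: "real^'n::{finite,linorder}" and h :: real and F' \<theta> :: "real^'n::{finite,linorder}^'n::{finite,linorder}"
  assumes "even CARD('n::{finite,linorder})"
    and "smooth_fun H"
    and "F' = Smat ** hess H ybar"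
    and "invertible F'"
    and "invertible (msinh ((h / 2) *\<^sub>R F'))"
    and "invertible (Smat ** Rmat H ybar + F' ** mcoth ((h / 2) *\<^sub>R F'))"
    and "\<theta> = 2 *\<^sub>R matrix_inv (Smat ** Rmat H ybar + F' ** mcoth ((h / 2) *\<^sub>R F'))"
    and "y' - y = \<theta> *v (Smat *v ci_dgrad H y y')"
  shows "H y' = H y"
proof -
  note ev = assms(1) and sm = assms(2) and F'def = assms(3) and invF = assms(4)
    and invs = assms(5) and invX = assms(6) and th = assms(7) and step = assms(8)
  define S :: "real^'n::{finite,linorder}^'n::{finite,linorder}" where "S = Smat"
  define P where "P = hess H ybar"
  define R where "R = Rmat H ybar"
  define A where "A = (h / 2) *\<^sub>R F'"
  define s where "s = msinh A"
  define c where "c = mcosh A"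
  define si where "si = matrix_inv s"
  define M where "M = P ** (c ** si)"
  define N where "N = R + M"
  define X where "X = Smat ** Rmat H ybar + F' ** mcoth ((h / 2) *\<^sub>R F')"
  define g where "g = ci_dgrad H y y'"
  have ST: "transpose S = - S" unfolding S_def by (rule Smat_T[OF ev])
  have PT: "transpose P = P"
    unfolding P_def hess_def transpose_def vec_eq_iff using hess_sym[OF sm] by simp
  have RT: "transpose R = - R"
  proof -
    have "P $ i $ j = P $ j $ i" for i j using PT by (simp add: transpose_def vec_eq_iff)
    then show ?thesis
      unfolding R_def Rmat_def transpose_def vec_eq_iff
      by (auto simp: P_def[symmetric] not_less_iff_gr_or_eq)
  qed
  have AT: "transpose A ** P = - (P ** A)"
    unfolding A_def F'def P_def[symmetric] S_def[symmetric]
    by (simp add: transpose_scalar matrix_transpose_mul PT ST mmul_scaleR_left mmul_scaleR_right mmul_neg_left mmul_neg_right matrix_mul_assoc)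
  have s1: "s ** si = mat 1" and s2: "si ** s = mat 1"
    using inv_props[OF invs] unfolding si_def s_def A_def by auto
  have sT: "transpose s ** P = - (P ** s)" unfolding s_def by (rule sinh_T[OF AT])
  have cT: "transpose c ** P = P ** c" unfolding c_def by (rule cosh_T[OF AT])
  have cs: "c ** s = s ** c" unfolding c_def s_def by (rule sinh_cosh_comm)
  have tsi: "transpose si ** transpose s = mat 1"
    using s1 by (simp add: matrix_transpose_mul[symmetric])
  have siT: "transpose si ** P = - (P ** si)"
  proof -
    have "transpose si ** P = (transpose si ** (P ** s)) ** si"
      by (simp only: matrix_mul_assoc[symmetric] s1 matrix_mul_rid)
    also have "\<dots> = (transpose si ** (- (transpose s ** P))) ** si"
      by (simp add: sT)
    also have "\<dots> = - (((transpose si ** transpose s) ** P) ** si)"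
      by (simp only: mmul_neg_left mmul_neg_right matrix_mul_assoc)
    also have "\<dots> = - (P ** si)" by (simp only: tsi matrix_mul_lid)
    finally show ?thesis .
  qed
  have sic: "si ** c = c ** si"
  proof -
    have "si ** c = si ** (c ** s) ** si"
      by (simp only: matrix_mul_assoc[symmetric] s1 matrix_mul_rid)
    also have "\<dots> = si ** (s ** c) ** si" by (simp only: cs)
    also have "\<dots> = c ** si"
      by (simp only: matrix_mul_assoc s2 matrix_mul_lid)
    finally show ?thesis .
  qed
  have MT: "transpose M = - M"
  proof -
    have "transpose M = transpose si ** (transpose c ** P)"
      unfolding M_def by (simp add: matrix_transpose_mul PT matrix_mul_assoc)
    also have "\<dots> = - (P ** (si ** c))"
      by (simp add: cT matrix_mul_assoc siT mmul_neg_left)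
    finally show ?thesis unfolding M_def sic .
  qed
  have NT0: "transpose N = transpose R + transpose M"
    unfolding N_def by (simp add: transpose_def vec_eq_iff)
  have NT: "transpose N = - N"
  proof -
    have "transpose N = - R + - M" using NT0 RT MT by simp
    then show ?thesis by (simp add: N_def)
  qed
  have co: "mcoth ((h / 2) *\<^sub>R F') = c ** si"
    unfolding mcoth_def c_def si_def s_def A_def ..
  have XSN: "X = S ** N"
  proof -
    have "X = S ** R + F' ** (c ** si)" unfolding X_def co S_def R_def ..
    also have "\<dots> = S ** N"
      unfolding F'def N_def M_def matrix_add_ldistrib S_def P_def by (simp only: matrix_mul_assoc)
    finally show ?thesis .
  qed
  have invS: "invertible S"
  proof -
    have "det F' \<noteq> 0" using invF invertible_det_nz by blast
    then have "det S \<noteq> 0" unfolding F'def S_def by (simp add: det_mul)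
    then show ?thesis using invertible_det_nz by blast
  qed
  define w where "w = matrix_inv X *v (S *v g)"
  have X1: "X ** matrix_inv X = mat 1" using inv_props[OF invX] unfolding X_def by auto
  have "X *v w = S *v g" unfolding w_def matrix_vector_mul_assoc[of X "matrix_inv X" "S *v g"] X1 by simp
  then have "S *v (N *v w) = S *v g" by (simp add: XSN matrix_vector_mul_assoc)
  then have Nw: "N *v w = g" using inj_matrix_vector_mult[OF invS] by (auto dest: injD)
  have thX: "\<theta> = 2 *\<^sub>R matrix_inv X" unfolding th X_def ..
  have "y' - y = 2 *\<^sub>R w"
    using step unfolding thX w_def g_def S_def by (simp add: scaleR_mvmul)
  then have "H y' - H y = g \<bullet> (2 *\<^sub>R w)"
    using dgrad_telescope[of H y' y] unfolding g_def by simp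
  also have "\<dots> = 2 * ((N *v w) \<bullet> w)" by (simp add: Nw)
  also have "\<dots> = 0" by (simp add: skew_form[OF NT])
  finally show ?thesis by simp
qed


end
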